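(* Let $G$ and $H$ be finite simple graphs, neither complete, and not both equal to a disjoint union of two complete graphs. Then $d_{G\diamond H}((g,h),(g',h'))=3$ if and only if at least one of the following holds: (1) $N_G[g]=N_G[g']$, $d_H(h,h')\ge 3$, and ($N_G[g]=V(G)$ or $\{h,h'\}$ is a $\gamma_H$-pair); (2) $N_H[h]=N_H[h']$, $d_G(g,g')\ge 3$, and ($N_H[h]=V(H)$ or $\{g,g'\}$ is a $\gamma_G$-pair).
   Context: The modular product $G\diamond H$ has vertex set $V(G)\times V(H)$; distinct vertices $(g,h)$ and $(g',h')$ are adjacent iff ($g=g'$ and $hh'\in E(H)$), or ($gg'\in E(G)$ and $h=h'$), or ($gg'\in E(G)$ and $hh'\in E(H)$), or ($g\neq g'$, $h\neq h'$, $gg'\notin E(G)$ and $hh'\notin E(H)$). $N_X[v]$ is the closed neighborhood; distances may be $\infty$ (written $\ge 3$ includes $\infty$). A $\gamma_G$-pair is a set $\{g,g'\}$ of two distinct vertices of $G$ such that $N_G[g]\cap N_G[g']=\emptyset$ and $N_G[g]\cup N_G[g']=V(G)$. *)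

theory Defs
  imports Main "HOL-Library.Extended_Nat"
begin

record 'a sgraph =
  verts :: "'a set"
  adj :: "'a \<Rightarrow> 'a \<Rightarrow> bool"

definition finite_simple_graph :: "'a sgraph \<Rightarrow> bool" where
  "finite_simple_graph G \<longleftrightarrow> finite (verts G)
     \<and> (\<forall>x y. adj G x y \<longrightarrow> x \<in> verts G \<and> y \<in> verts G)
     \<and> (\<forall>x y. adj G x y \<longrightarrow> adj G y x)
     \<and> (\<forall>x. \<not> adj G x x)"

definition complete_graph :: "'a sgraph \<Rightarrow> bool" where
  "complete_graph G \<longleftrightarrow> (\<forall>x\<in>verts G. \<forall>y\<in>verts G. x \<noteq> y \<longrightarrow> adj G x y)"

definition two_complete_union :: "'a sgraph \<Rightarrow> bool" where
  "two_complete_union G \<longleftrightarrow> (\<exists>A B. A \<noteq> {} \<and> B \<noteq> {} \<and> A \<inter> B = {} \<and> A \<union> B = verts G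
     \<and> (\<forall>x\<in>verts G. \<forall>y\<in>verts G. adj G x y \<longleftrightarrow> x \<noteq> y \<and> ((x \<in> A \<and> y \<in> A) \<or> (x \<in> B \<and> y \<in> B))))"

definition closed_nbhd :: "'a sgraph \<Rightarrow> 'a \<Rightarrow> 'a set" where
  "closed_nbhd G v = {u \<in> verts G. u = v \<or> adj G v u}"

definition gdist :: "'a sgraph \<Rightarrow> 'a \<Rightarrow> 'a \<Rightarrow> enat" where
  "gdist G x y = (if \<exists>n. ((adj G) ^^ n) x y then enat (LEAST n. ((adj G) ^^ n) x y) else \<infinity>)"

definition gamma_pair :: "'a sgraph \<Rightarrow> 'a \<Rightarrow> 'a \<Rightarrow> bool" where
  "gamma_pair G g g' \<longleftrightarrow> g \<in> verts G \<and> g' \<in> verts G \<and> g \<noteq> g'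
     \<and> closed_nbhd G g \<inter> closed_nbhd G g' = {}
     \<and> closed_nbhd G g \<union> closed_nbhd G g' = verts G"

definition modular_product :: "'a sgraph \<Rightarrow> 'b sgraph \<Rightarrow> ('a \<times> 'b) sgraph" where
  "modular_product G H = \<lparr> verts = verts G \<times> verts H,
     adj = (\<lambda>(g,h) (g',h'). (g,h) \<in> verts G \<times> verts H \<and> (g',h') \<in> verts G \<times> verts H
        \<and> (g,h) \<noteq> (g',h') \<and>
        ((g = g' \<and> adj H h h') \<or> (adj G g g' \<and> h = h') \<or> (adj G g g' \<and> adj H h h')
         \<or> (g \<noteq> g' \<and> h \<noteq> h' \<and> \<not> adj G g g' \<and> \<not> adj H h h'))) \<rparr>"

end

theory Submission imports Defs begin
definition far :: "('v \<Rightarrow> 'v \<Rightarrow> bool) \<Rightarrow> 'v \<Rightarrow> 'v \<Rightarrow> bool" where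
  "far R x y \<longleftrightarrow> x \<noteq> y \<and> \<not> R x y \<and> \<not> (\<exists>z. R x z \<and> R z y)"

lemma relpow2: "(R ^^ 2) x y \<longleftrightarrow> (\<exists>z. R x z \<and> R z y)"
  by (auto simp: numeral_2_eq_2 relcompp_apply)

lemma far_iff: "far R x y \<longleftrightarrow> \<not> (R^^0) x y \<and> \<not> (R^^1) x y \<and> \<not> (R^^2) x y"
  unfolding far_def relpow2 by auto

lemma gdist_ge3: "gdist G x y \<ge> 3 \<longleftrightarrow> far (adj G) x y"
proof -
  let ?P = "\<lambda>n. ((adj G) ^^ n) x y"
  show ?thesis
  proof (cases "\<exists>n. ?P n")
    case True
    have "gdist G x y = enat (LEAST n. ?P n)" using True by (simp add: gdist_def)
    moreover have "(LEAST n. ?P n) \<ge> 3 \<longleftrightarrow> \<not> ?P 0 \<and> \<not> ?P 1 \<and> \<not> ?P 2"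
    proof
      assume a: "(LEAST n. ?P n) \<ge> 3"
      show "\<not> ?P 0 \<and> \<not> ?P 1 \<and> \<not> ?P 2"
        using a Least_le[of ?P 0] Least_le[of ?P 1] Least_le[of ?P 2] by auto
    next
      assume a: "\<not> ?P 0 \<and> \<not> ?P 1 \<and> \<not> ?P 2"
      have "?P (LEAST n. ?P n)" using True by (rule LeastI_ex)
      then have "(LEAST n. ?P n) \<noteq> 0" "(LEAST n. ?P n) \<noteq> 1" "(LEAST n. ?P n) \<noteq> 2" using a by auto
      then show "(LEAST n. ?P n) \<ge> 3" by linarith
    qed
    ultimately show ?thesis by (simp add: far_iff numeral_eq_enat)
  next
    case False
    then have "\<not> ?P 0 \<and> \<not> ?P 1 \<and> \<not> ?P 2" by blast
    then have "far (adj G) x y" unfolding far_iff by assumption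
    moreover have "gdist G x y = \<infinity>" using False by (simp add: gdist_def)
    ultimately show ?thesis by simp
  qed
qed

lemma gdist_eq3: "gdist G x y = 3 \<longleftrightarrow> far (adj G) x y \<and> (\<exists>n\<le>3. ((adj G) ^^ n) x y)"
proof -
  let ?P = "\<lambda>n. ((adj G) ^^ n) x y"
  have e: "(\<exists>n\<le>3. ?P n) \<longleftrightarrow> ?P 0 \<or> ?P 1 \<or> ?P 2 \<or> ?P 3"
  proof
    assume "\<exists>n\<le>3. ?P n"
    then obtain n where "n \<le> 3" "?P n" by blast
    then show "?P 0 \<or> ?P 1 \<or> ?P 2 \<or> ?P 3"
      by (cases n; cases "n - 1"; cases "n - 2"; auto simp: numeral_3_eq_3 numeral_2_eq_2)
  next
    assume h: "?P 0 \<or> ?P 1 \<or> ?P 2 \<or> ?P 3"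
    have "(0::nat) \<le> 3" "(1::nat) \<le> 3" "(2::nat) \<le> 3" "(3::nat) \<le> 3" by auto
    then show "\<exists>n\<le>3. ?P n" using h by blast
  qed
  show ?thesis
  proof (cases "\<exists>n. ?P n")
    case True
    have g: "gdist G x y = enat (LEAST n. ?P n)" using True by (simp add: gdist_def)
    have "(LEAST n. ?P n) = 3 \<longleftrightarrow> \<not> ?P 0 \<and> \<not> ?P 1 \<and> \<not> ?P 2 \<and> ?P 3"
    proof
      assume a: "(LEAST n. ?P n) = 3"
      have "?P (LEAST n. ?P n)" using True by (rule LeastI_ex)
      then show "\<not> ?P 0 \<and> \<not> ?P 1 \<and> \<not> ?P 2 \<and> ?P 3"
        using a not_less_Least[of 0 ?P] not_less_Least[of 1 ?P] not_less_Least[of 2 ?P] by auto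
    next
      assume a: "\<not> ?P 0 \<and> \<not> ?P 1 \<and> \<not> ?P 2 \<and> ?P 3"
      show "(LEAST n. ?P n) = 3"
      proof (rule Least_equality)
        show "?P 3" using a by simp
        fix m assume "?P m"
        then show "3 \<le> m" using a by (cases "m \<ge> 3") (auto simp: not_le less_Suc_eq numeral_3_eq_3 numeral_2_eq_2)
      qed
    qed
    then show ?thesis using g e by (auto simp: far_iff numeral_eq_enat)
  next
    case False
    then show ?thesis by (auto simp: gdist_def far_iff)
  qed
qed

abbreviation MP where "MP G H \<equiv> adj (modular_product G H)"

lemma mp_adj: "MP G H (g,h) (g',h') \<longleftrightarrow> g \<in> verts G \<and> h \<in> verts H \<and> g' \<in> verts G \<and> h' \<in> verts H
   \<and> (g,h) \<noteq> (g',h') \<and>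
        ((g = g' \<and> adj H h h') \<or> (adj G g g' \<and> h = h') \<or> (adj G g g' \<and> adj H h h')
         \<or> (g \<noteq> g' \<and> h \<noteq> h' \<and> \<not> adj G g g' \<and> \<not> adj H h h'))"
  unfolding modular_product_def by simp

lemma mp_swap: "MP H G (h,g) (h',g') = MP G H (g,h) (g',h')"
  unfolding mp_adj by blast

lemma mp_swap': "MP H G = (\<lambda>a b. MP G H (prod.swap a) (prod.swap b))"
proof (intro ext)
  fix a b
  show "MP H G a b = MP G H (prod.swap a) (prod.swap b)"
    by (cases a; cases b) (metis mp_swap swap_simp)
qed

lemma far_swap: "far (MP H G) (h,g) (h',g') = far (MP G H) (g,h) (g',h')"
  unfolding far_def split_paired_Ex mp_adj by blast

lemma relpowp_map: "((\<lambda>a b. R (f a) (f b)) ^^ n) a b \<Longrightarrow> (R ^^ n) (f a) (f b)"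
proof (induction n arbitrary: b)
  case 0 then show ?case by simp
next
  case (Suc n)
  then obtain c where "((\<lambda>a b. R (f a) (f b)) ^^ n) a c" "R (f c) (f b)" by auto
  then show ?case using Suc.IH by auto
qed

lemma nbhd_mem: "x \<in> closed_nbhd G v \<longleftrightarrow> x \<in> verts G \<and> (x = v \<or> adj G v x)"
  by (simp add: closed_nbhd_def)

lemma fsgD:
  assumes "finite_simple_graph G"
  shows "adj G x y \<Longrightarrow> x \<in> verts G" "adj G x y \<Longrightarrow> y \<in> verts G"
    "adj G x y \<Longrightarrow> adj G y x" "\<not> adj G x x"
  using assms by (auto simp: finite_simple_graph_def)

definition Cf where
  "Cf G H g h g' h' \<longleftrightarrow> closed_nbhd G g = closed_nbhd G g' \<and> far (adj H) h h'
     \<and> (closed_nbhd G g = verts G \<or> gamma_pair H h h')"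

lemma N1:
  assumes G: "finite_simple_graph G" and H: "finite_simple_graph H"
  and mem: "g\<in>verts G" "g'\<in>verts G" "h\<in>verts H" "h'\<in>verts H"
  and nC: "\<not> Cf G H g h g' h'"
  and gg: "g = g' \<or> adj G g g'" and hh: "h \<noteq> h'" "\<not> adj H h h'"
  shows "\<not> far (MP G H) (g,h) (g',h')"
proof
  assume F: "far (MP G H) (g,h) (g',h')"
  then have np: "\<And>w. MP G H (g,h) w \<Longrightarrow> MP G H w (g',h') \<Longrightarrow> False"
    unfolding far_def by blast
  note Gd = fsgD[OF G] and Hd = fsgD[OF H]
  have NE: "closed_nbhd G g = closed_nbhd G g'"
  proof (rule ccontr)
    assume ne: "closed_nbhd G g \<noteq> closed_nbhd G g'"
    then have gne: "g \<noteq> g'" by auto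
    with gg have agg: "adj G g g'" by auto
    from ne obtain x where x: "(x \<in> closed_nbhd G g \<and> x \<notin> closed_nbhd G g') \<or>
       (x \<notin> closed_nbhd G g \<and> x \<in> closed_nbhd G g')" by blast
    then show False
    proof
      assume a: "x \<in> closed_nbhd G g \<and> x \<notin> closed_nbhd G g'"
      then have x: "adj G g x" "x \<noteq> g'" "\<not> adj G g' x" "x \<in> verts G"
        using agg Gd(3) unfolding nbhd_mem by blast+
      have x2: "g \<noteq> x" "\<not> adj G x g'" using x Gd(3,4) by blast+
      have m1: "MP G H (g,h) (x,h)" using x x2 mem by (simp add: mp_adj)
      have m2: "MP G H (x,h) (g',h')" using x x2 mem hh by (simp add: mp_adj)
      show False using np[OF m1 m2] .
    next
      assume a: "x \<notin> closed_nbhd G g \<and> x \<in> closed_nbhd G g'"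
      then have x: "adj G g' x" "x \<noteq> g" "\<not> adj G g x" "x \<in> verts G"
        using agg Gd(3) unfolding nbhd_mem by blast+
      have x2: "g' \<noteq> x" "\<not> adj G x g" "adj G x g'" using x Gd(3,4) by blast+
      have m1: "MP G H (g,h) (x,h')" using x x2 mem hh by (simp add: mp_adj)
      have m2: "MP G H (x,h') (g',h')" using x x2 mem by (simp add: mp_adj)
      show False using np[OF m1 m2] .
    qed
  qed
  show False
  proof (cases "far (adj H) h h'")
    case False
    then obtain y where y: "adj H h y" "adj H y h'" using hh unfolding far_def by blast
    moreover have "h \<noteq> y" "y \<noteq> h'" "y \<in> verts H" using y Hd(1,4) by blast+
    ultimately have m1: "MP G H (g,h) (g,y)" using mem by (simp add: mp_adj)
    have m2: "MP G H (g,y) (g',h')" using gg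
    proof
      assume "g = g'" then show ?thesis using y \<open>y \<in> verts H\<close> \<open>y \<noteq> h'\<close> mem by (simp add: mp_adj)
    next
      assume "adj G g g'" then show ?thesis using y \<open>y \<in> verts H\<close> \<open>y \<noteq> h'\<close> mem by (simp add: mp_adj)
    qed
    show False using np[OF m1 m2] .
  next
    case True
    with nC NE have a: "closed_nbhd G g \<noteq> verts G" "\<not> gamma_pair H h h'" unfolding Cf_def by auto
    from a(1) obtain x where x: "x \<in> verts G" "x \<noteq> g" "\<not> adj G g x"
      by (auto simp: closed_nbhd_def)
    have "x \<notin> closed_nbhd G g'" using x NE by (auto simp: nbhd_mem)
    then have "x \<noteq> g'" "\<not> adj G x g'" using x Gd(3) unfolding nbhd_mem by blast+
    have disj: "closed_nbhd H h \<inter> closed_nbhd H h' = {}"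
      using True unfolding far_def by (auto simp: nbhd_mem; metis Hd(3))
    with a(2) mem hh have "closed_nbhd H h \<union> closed_nbhd H h' \<noteq> verts H"
      unfolding gamma_pair_def by auto
    then obtain y where "y \<in> verts H" "y \<notin> closed_nbhd H h" "y \<notin> closed_nbhd H h'"
      unfolding closed_nbhd_def by blast
    then have y: "y \<in> verts H" "y \<noteq> h" "\<not> adj H h y" "y \<noteq> h'" "\<not> adj H h' y"
      by (auto simp: nbhd_mem)
    have "\<not> adj H y h'" using y Hd(3) by blast
    have m1: "MP G H (g,h) (x,y)" using x y mem by (simp add: mp_adj)
    have m2: "MP G H (x,y) (g',h')" using x y mem \<open>x \<noteq> g'\<close> \<open>\<not> adj G x g'\<close> \<open>\<not> adj H y h'\<close>
      by (simp add: mp_adj)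
    show False using np[OF m1 m2] .
  qed
qed


lemma N:
  assumes G: "finite_simple_graph G" and H: "finite_simple_graph H"
  and mem: "g\<in>verts G" "g'\<in>verts G" "h\<in>verts H" "h'\<in>verts H"
  and nC1: "\<not> Cf G H g h g' h'" and nC2: "\<not> Cf H G h g h' g'"
  shows "\<not> far (MP G H) (g,h) (g',h')"
proof -
  consider (a) "g=g' \<and> h=h'" | (b) "(g=g' \<or> adj G g g') \<and> h\<noteq>h' \<and> \<not>adj H h h'"
    | (c) "(h=h' \<or> adj H h h') \<and> g\<noteq>g' \<and> \<not>adj G g g'" | (d) "MP G H (g,h) (g',h')"
  proof -
    have "(g=g' \<and> h=h') \<or> ((g=g' \<or> adj G g g') \<and> h\<noteq>h' \<and> \<not>adj H h h')
    \<or> ((h=h' \<or> adj H h h') \<and> g\<noteq>g' \<and> \<not>adj G g g') \<or> MP G H (g,h) (g',h')"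
    proof -
      have e: "MP G H (g,h) (g',h') \<longleftrightarrow> (g \<noteq> g' \<or> h \<noteq> h') \<and>
        ((g = g' \<and> adj H h h') \<or> (adj G g g' \<and> h = h') \<or> (adj G g g' \<and> adj H h h')
         \<or> (g \<noteq> g' \<and> h \<noteq> h' \<and> \<not> adj G g g' \<and> \<not> adj H h h'))"
        using mem by (simp add: mp_adj)
      show ?thesis unfolding e by blast
    qed
    then show "\<And>thesis. (g=g' \<and> h=h' \<Longrightarrow> thesis) \<Longrightarrow> ((g=g' \<or> adj G g g') \<and> h\<noteq>h' \<and> \<not>adj H h h' \<Longrightarrow> thesis)
      \<Longrightarrow> ((h=h' \<or> adj H h h') \<and> g\<noteq>g' \<and> \<not>adj G g g' \<Longrightarrow> thesis) \<Longrightarrow> (MP G H (g,h) (g',h') \<Longrightarrow> thesis) \<Longrightarrow> thesis"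
      by blast
  qed
  then show ?thesis
  proof cases
    case a then show ?thesis by (simp add: far_def)
  next
    case b then show ?thesis using N1[OF G H mem nC1] by blast
  next
    case c then have "\<not> far (MP H G) (h,g) (h',g')" using N1[OF H G mem(3,4,1,2) nC2] by blast
    then show ?thesis using far_swap[of H G h g h' g'] by simp
  next
    case d then show ?thesis by (simp add: far_def)
  qed
qed

lemma F1:
  assumes G: "finite_simple_graph G" and H: "finite_simple_graph H"
  and mem: "g\<in>verts G" "g'\<in>verts G" "h\<in>verts H" "h'\<in>verts H"
  and C: "Cf G H g h g' h'"
  shows "far (MP G H) (g,h) (g',h')"
proof -
  note Gd = fsgD[OF G] and Hd = fsgD[OF H]
  from C have NE: "closed_nbhd G g = closed_nbhd G g'" and fH: "far (adj H) h h'"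
    and alt: "closed_nbhd G g = verts G \<or> gamma_pair H h h'" unfolding Cf_def by auto
  from fH have hne: "h \<noteq> h'" "\<not> adj H h h'" and nocn: "\<And>z. adj H h z \<Longrightarrow> adj H z h' \<Longrightarrow> False"
    unfolding far_def by auto
  have "g' \<in> closed_nbhd G g" using NE mem by (simp add: nbhd_mem)
  then have gg: "g' = g \<or> adj G g g'" by (simp add: nbhd_mem)
  have nadj: "\<not> MP G H (g,h) (g',h')" using gg hne by (auto simp: mp_adj)
  have nocommon: False if m1: "MP G H (g,h) (x,y)" and m2: "MP G H (x,y) (g',h')" for x y
  proof (cases "x \<in> closed_nbhd G g")
    case True
    then have x1: "x = g \<or> adj G g x" by (simp add: nbhd_mem)
    have "x \<in> closed_nbhd G g'" using True NE by simp
    then have x2: "x = g' \<or> adj G x g'" using Gd(3) unfolding nbhd_mem by blast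
    from m1 x1 have y1: "y = h \<or> adj H h y" by (auto simp: mp_adj)
    from m2 x2 have y2: "y = h' \<or> adj H y h'" by (auto simp: mp_adj)
    from y1 y2 show False using hne nocn Hd(3) by blast
  next
    case False
    have xv: "x \<in> verts G" using m1 by (simp add: mp_adj)
    with False have x1: "x \<noteq> g" "\<not> adj G g x" by (auto simp: nbhd_mem)
    have "x \<notin> closed_nbhd G g'" using False NE by simp
    with xv have x2: "x \<noteq> g'" "\<not> adj G x g'" using Gd(3) unfolding nbhd_mem by blast+
    from m1 x1 have y1: "y \<noteq> h" "\<not> adj H h y" "y \<in> verts H" by (auto simp: mp_adj)
    from m2 x2 have y2: "y \<noteq> h'" "\<not> adj H y h'" by (auto simp: mp_adj)
    from alt show False
    proof
      assume "closed_nbhd G g = verts G" with xv False show False by simp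
    next
      assume "gamma_pair H h h'"
      then have "y \<in> closed_nbhd H h \<union> closed_nbhd H h'" using y1 unfolding gamma_pair_def by auto
      then show False using y1 y2 Hd(3) unfolding Un_iff nbhd_mem by blast
    qed
  qed
  show ?thesis unfolding far_def using nadj nocommon hne by auto
qed


lemma nf_rel: "\<not> far R w v \<Longrightarrow> \<exists>n\<le>2. (R^^n) w v"
proof -
  assume "\<not> far R w v"
  then have h: "(R^^0) w v \<or> (R^^1) w v \<or> (R^^2) w v" unfolding far_iff by blast
  then show ?thesis
  proof (elim disjE)
    assume "(R^^0) w v" then show ?thesis by (intro exI[where x="0::nat"] conjI) simp_all
  next
    assume "(R^^1) w v" then show ?thesis by (intro exI[where x="1::nat"] conjI) simp_all
  next
    assume "(R^^2) w v" then show ?thesis by (intro exI[where x="2::nat"] conjI) simp_all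
  qed
qed

lemma stepL: "R u w \<Longrightarrow> \<not> far R w v \<Longrightarrow> \<exists>n\<le>3. (R^^n) u v"
proof -
  assume a: "R u w" "\<not> far R w v"
  from nf_rel[OF a(2)] obtain n where n: "n \<le> 2" "(R^^n) w v" by (elim exE conjE)
  have "(R^^Suc n) u v" by (rule relpowp_Suc_I2[OF a(1) n(2)])
  moreover have "Suc n \<le> 3" using n(1) by simp
  ultimately show ?thesis by (intro exI[where x="Suc n"] conjI)
qed

lemma stepR: "\<not> far R u w \<Longrightarrow> R w v \<Longrightarrow> \<exists>n\<le>3. (R^^n) u v"
proof -
  assume a: "\<not> far R u w" "R w v"
  from nf_rel[OF a(1)] obtain n where n: "n \<le> 2" "(R^^n) u w" by (elim exE conjE)
  have "(R^^Suc n) u v" by (rule relpowp_Suc_I[OF n(2) a(2)])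
  moreover have "Suc n \<le> 3" using n(1) by simp
  ultimately show ?thesis by (intro exI[where x="Suc n"] conjI)
qed

lemma gamma_nbhd: "gamma_pair G a b \<Longrightarrow> closed_nbhd G a = verts G - closed_nbhd G b"
  unfolding gamma_pair_def closed_nbhd_def by blast

lemma tcu_intro:
  assumes G: "finite_simple_graph G"
  and ne: "A \<noteq> {}" "B \<noteq> {}" "A \<inter> B = {}" and un: "A \<union> B = verts G"
  and NA: "\<And>x. x \<in> A \<Longrightarrow> closed_nbhd G x = A" and NB: "\<And>x. x \<in> B \<Longrightarrow> closed_nbhd G x = B"
  shows "two_complete_union G"
proof -
  have key: "adj G x y \<longleftrightarrow> x \<noteq> y \<and> (x \<in> A \<and> y \<in> A \<or> x \<in> B \<and> y \<in> B)"
    if xy: "x \<in> verts G" "y \<in> verts G" for x y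
  proof -
    have yN: "y \<in> closed_nbhd G x \<longleftrightarrow> y = x \<or> adj G x y" using xy(2) by (simp add: nbhd_mem)
    have irr: "adj G x y \<Longrightarrow> x \<noteq> y" using fsgD(4)[OF G, of x] by blast
    show ?thesis
    proof (cases "x \<in> A")
      case True
      then have N: "closed_nbhd G x = A" by (rule NA)
      have "x \<notin> B" using True ne(3) by blast
      moreover have "adj G x y \<longleftrightarrow> x \<noteq> y \<and> y \<in> A"
        using yN irr unfolding N by blast
      ultimately show ?thesis using True by blast
    next
      case False
      then have xB: "x \<in> B" using xy un by blast
      then have N: "closed_nbhd G x = B" by (rule NB)
      have "adj G x y \<longleftrightarrow> x \<noteq> y \<and> y \<in> B"
        using yN irr unfolding N by blast
      then show ?thesis using False xB by blast
    qed
  qed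
  show ?thesis unfolding two_complete_union_def
    by (rule exI[of _ A], rule exI[of _ B]) (use ne un key in blast)
qed

lemma T1:
  assumes G: "finite_simple_graph G" and H: "finite_simple_graph H"
  and nG: "\<not> complete_graph G" and nH: "\<not> complete_graph H"
  and ntcu: "\<not> (two_complete_union G \<and> two_complete_union H)"
  and mem: "g\<in>verts G" "g'\<in>verts G" "h\<in>verts H" "h'\<in>verts H"
  and C: "Cf G H g h g' h'"
  shows "\<exists>n\<le>3. (MP G H ^^ n) (g,h) (g',h')"
proof -
  note Gd = fsgD[OF G] and Hd = fsgD[OF H]
  from C have NE: "closed_nbhd G g = closed_nbhd G g'" and fH: "far (adj H) h h'"
    and alt: "closed_nbhd G g = verts G \<or> gamma_pair H h h'" unfolding Cf_def by auto
  from fH have hne: "h \<noteq> h'" "\<not> adj H h h'" and nocn: "\<And>z. adj H h z \<Longrightarrow> adj H z h' \<Longrightarrow> False"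
    unfolding far_def by auto
  have disj: "closed_nbhd H h \<inter> closed_nbhd H h' = {}"
    using fH unfolding far_def by (auto simp: nbhd_mem; metis Hd(3))
  have hNh: "h \<in> closed_nbhd H h" "h' \<in> closed_nbhd H h'" "g \<in> closed_nbhd G g" "g' \<in> closed_nbhd G g'"
    using mem by (auto simp: nbhd_mem)
  have NHne: "closed_nbhd H h \<noteq> closed_nbhd H h'" using disj hNh by auto
  show ?thesis
  proof (cases "\<exists>c \<in> closed_nbhd G g. closed_nbhd G c \<noteq> closed_nbhd G g")
    case True
    then obtain c where c: "c \<in> closed_nbhd G g" "closed_nbhd G c \<noteq> closed_nbhd G g" by blast
    then have "c \<noteq> g" by auto
    with c have cc: "adj G g c" "c \<in> verts G" by (auto simp: nbhd_mem)
    have m: "MP G H (g,h) (c,h)" using cc \<open>c \<noteq> g\<close> mem by (simp add: mp_adj)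
    have "\<not> Cf G H c h g' h'" using c NE unfolding Cf_def by auto
    moreover have "\<not> Cf H G h c h' g'" using NHne unfolding Cf_def by auto
    ultimately have "\<not> far (MP G H) (c,h) (g',h')" using N[OF G H cc(2) mem(2,3,4)] by blast
    then show ?thesis using stepL[of "MP G H", OF m] by blast
  next
    case False
    then have allc: "\<And>c. c \<in> closed_nbhd G g \<Longrightarrow> closed_nbhd G c = closed_nbhd G g" by blast
    have NgV: "closed_nbhd G g \<noteq> verts G"
    proof
      assume V: "closed_nbhd G g = verts G"
      have "complete_graph G" unfolding complete_graph_def
      proof (intro ballI impI)
        fix x y assume "x \<in> verts G" "y \<in> verts G" "x \<noteq> y"
        then have "x \<in> closed_nbhd G g" using V by simp
        then have "closed_nbhd G x = verts G" using allc[of x] V by simp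
        then have "y \<in> closed_nbhd G x" using \<open>y \<in> verts G\<close> by simp
        then show "adj G x y" using \<open>x \<noteq> y\<close> by (simp add: nbhd_mem)
      qed
      then show False using nG by simp
    qed
    with alt have gam: "gamma_pair H h h'" by simp
    have Nh: "closed_nbhd H h = verts H - closed_nbhd H h'" using gamma_nbhd[OF gam] .
    have Nh': "closed_nbhd H h' = verts H - closed_nbhd H h"
      using gam unfolding gamma_pair_def by auto
    show ?thesis
    proof (cases "\<exists>d \<in> closed_nbhd H h. closed_nbhd H d \<noteq> closed_nbhd H h")
      case True
      then obtain d where d: "d \<in> closed_nbhd H h" "closed_nbhd H d \<noteq> closed_nbhd H h" by blast
      then have "d \<noteq> h" by auto
      with d have dd: "adj H h d" "d \<in> verts H" by (auto simp: nbhd_mem)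
      have m: "MP G H (g,h) (g,d)" using dd \<open>d \<noteq> h\<close> mem by (simp add: mp_adj)
      have "\<not> gamma_pair H d h'" using gamma_nbhd[of H d h'] Nh d(2) by auto
      then have c1: "\<not> Cf G H g d g' h'" using NgV unfolding Cf_def by auto
      have "d \<in> closed_nbhd H d" using dd by (simp add: nbhd_mem)
      then have "closed_nbhd H d \<noteq> closed_nbhd H h'"
        using d(1) disj by blast
      then have "\<not> Cf H G d g h' g'" unfolding Cf_def by auto
      with c1 have "\<not> far (MP G H) (g,d) (g',h')" using N[OF G H mem(1,2) dd(2) mem(4)] by blast
      then show ?thesis using stepL[of "MP G H", OF m] by blast
    next
      case False
      then have alld: "\<And>d. d \<in> closed_nbhd H h \<Longrightarrow> closed_nbhd H d = closed_nbhd H h" by blast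
      show ?thesis
      proof (cases "\<exists>d \<in> closed_nbhd H h'. closed_nbhd H d \<noteq> closed_nbhd H h'")
        case True
        then obtain d where d: "d \<in> closed_nbhd H h'" "closed_nbhd H d \<noteq> closed_nbhd H h'" by blast
        then have "d \<noteq> h'" by auto
        with d have dd: "adj H h' d" "d \<in> verts H" by (auto simp: nbhd_mem)
        have "adj H d h'" using dd Hd(3) by blast
        then have m: "MP G H (g',d) (g',h')" using dd \<open>d \<noteq> h'\<close> mem by (simp add: mp_adj)
        have "\<not> gamma_pair H h d"
        proof
          assume "gamma_pair H h d"
          then have "closed_nbhd H d = verts H - closed_nbhd H h" unfolding gamma_pair_def by blast
          then show False using Nh' d(2) by simp
        qed
        then have c1: "\<not> Cf G H g h g' d" using NgV unfolding Cf_def by auto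
        have "d \<in> closed_nbhd H d" using dd by (simp add: nbhd_mem)
        then have "closed_nbhd H h \<noteq> closed_nbhd H d"
          using d(1) disj by blast
        then have "\<not> Cf H G h g d g'" unfolding Cf_def by auto
        with c1 have "\<not> far (MP G H) (g,h) (g',d)" using N[OF G H mem(1,2,3) dd(2)] by blast
        then show ?thesis using stepR[of "MP G H", OF _ m] by blast
      next
        case False
        then have alld': "\<And>d. d \<in> closed_nbhd H h' \<Longrightarrow> closed_nbhd H d = closed_nbhd H h'" by blast
        have "two_complete_union H"
        proof (rule tcu_intro[OF H _ _ _ _ alld alld'])
          show "closed_nbhd H h \<noteq> {}" "closed_nbhd H h' \<noteq> {}" using hNh by blast+
          show "closed_nbhd H h \<inter> closed_nbhd H h' = {}" by (rule disj)
          show "closed_nbhd H h \<union> closed_nbhd H h' = verts H" using gam unfolding gamma_pair_def by blast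
        qed
        with ntcu have ntG: "\<not> two_complete_union G" by blast
        have "\<exists>a \<in> verts G - closed_nbhd G g. \<not> gamma_pair G a g'"
        proof (rule ccontr)
          assume "\<not> ?thesis"
          then have ga: "\<And>a. a \<in> verts G - closed_nbhd G g \<Longrightarrow> closed_nbhd G a = verts G - closed_nbhd G g"
          proof -
            fix a assume "a \<in> verts G - closed_nbhd G g"
            then have "gamma_pair G a g'" using \<open>\<not> (\<exists>a \<in> verts G - closed_nbhd G g. \<not> gamma_pair G a g')\<close> by blast
            then show "closed_nbhd G a = verts G - closed_nbhd G g" using gamma_nbhd[of G a g'] NE by simp
          qed
          have "two_complete_union G"
          proof (rule tcu_intro[OF G _ _ _ _ allc ga])
            have sub: "closed_nbhd G g \<subseteq> verts G" unfolding closed_nbhd_def by blast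
            show "closed_nbhd G g \<noteq> {}" using hNh by blast
            show "verts G - closed_nbhd G g \<noteq> {}" using sub NgV by blast
            show "closed_nbhd G g \<inter> (verts G - closed_nbhd G g) = {}" by blast
            show "closed_nbhd G g \<union> (verts G - closed_nbhd G g) = verts G" using sub by blast
          qed
          with ntG show False by blast
        qed
        then obtain a where a: "a \<in> verts G" "a \<notin> closed_nbhd G g" "\<not> gamma_pair G a g'" by blast
        then have a2: "a \<noteq> g" "\<not> adj G g a" by (auto simp: nbhd_mem)
        have m: "MP G H (g,h) (a,h')" using a a2 hne mem by (simp add: mp_adj)
        have "closed_nbhd G a \<noteq> closed_nbhd G g'" using a NE by (auto simp: nbhd_mem)
        then have c1: "\<not> Cf G H a h' g' h'" unfolding Cf_def by auto
        have "closed_nbhd H h' \<noteq> verts H" using hNh disj mem by auto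
        then have "\<not> Cf H G h' a h' g'" using a unfolding Cf_def by auto
        with c1 have "\<not> far (MP G H) (a,h') (g',h')" using N[OF G H a(1) mem(2) mem(4,4)] by blast
        then show ?thesis using stepL[of "MP G H", OF m] by blast
      qed
    qed
  qed
qed


theorem mainTheorem4:
  fixes G :: "'a sgraph" and H :: "'b sgraph"
  assumes "finite_simple_graph G" and "finite_simple_graph H"
    and "\<not> complete_graph G" and "\<not> complete_graph H"
    and "\<not> (two_complete_union G \<and> two_complete_union H)"
    and "g \<in> verts G" and "g' \<in> verts G" and "h \<in> verts H" and "h' \<in> verts H"
  shows "gdist (modular_product G H) (g,h) (g',h') = 3 \<longleftrightarrow>
    ((closed_nbhd G g = closed_nbhd G g' \<and> gdist H h h' \<ge> 3
       \<and> (closed_nbhd G g = verts G \<or> gamma_pair H h h'))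
     \<or> (closed_nbhd H h = closed_nbhd H h' \<and> gdist G g g' \<ge> 3
       \<and> (closed_nbhd H h = verts H \<or> gamma_pair G g g')))"
proof -
  have R: "((closed_nbhd G g = closed_nbhd G g' \<and> gdist H h h' \<ge> 3
       \<and> (closed_nbhd G g = verts G \<or> gamma_pair H h h'))
     \<or> (closed_nbhd H h = closed_nbhd H h' \<and> gdist G g g' \<ge> 3
       \<and> (closed_nbhd H h = verts H \<or> gamma_pair G g g'))) \<longleftrightarrow>
     Cf G H g h g' h' \<or> Cf H G h g h' g'"
    unfolding Cf_def gdist_ge3 by blast
  have L: "gdist (modular_product G H) (g,h) (g',h') = 3 \<longleftrightarrow>
      far (MP G H) (g,h) (g',h') \<and> (\<exists>n\<le>3. (MP G H ^^ n) (g,h) (g',h'))"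
    by (rule gdist_eq3)
  have ntcu': "\<not> (two_complete_union H \<and> two_complete_union G)" using assms(5) by blast
  show ?thesis
    unfolding R L
  proof
    assume "far (MP G H) (g,h) (g',h') \<and> (\<exists>n\<le>3. (MP G H ^^ n) (g,h) (g',h'))"
    then show "Cf G H g h g' h' \<or> Cf H G h g h' g'" using N[OF assms(1,2,6-9)] by blast
  next
    assume "Cf G H g h g' h' \<or> Cf H G h g h' g'"
    then show "far (MP G H) (g,h) (g',h') \<and> (\<exists>n\<le>3. (MP G H ^^ n) (g,h) (g',h'))"
    proof
      assume C: "Cf G H g h g' h'"
      show ?thesis using F1[OF assms(1,2,6-9) C] T1[OF assms(1-9) C] by blast
    next
      assume C: "Cf H G h g h' g'"
      have f: "far (MP G H) (g,h) (g',h')"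
        using F1[OF assms(2,1,8,9,6,7) C] far_swap by metis
      obtain n where n: "n \<le> 3" "(MP H G ^^ n) (h,g) (h',g')"
        using T1[OF assms(2,1,4,3) ntcu' assms(8,9,6,7) C] by blast
      have "(MP G H ^^ n) (prod.swap (h,g)) (prod.swap (h',g'))"
      proof -
        have e: "MP H G = (\<lambda>a b. MP G H (prod.swap a) (prod.swap b))" by (rule mp_swap')
        have "((\<lambda>a b. MP G H (prod.swap a) (prod.swap b)) ^^ n) (h,g) (h',g')" using n(2) e by simp
        then show ?thesis by (rule relpowp_map)
      qed
      then show ?thesis using f n(1) by auto
    qed
  qed
qed

end
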